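(* In the acoustic setting, suppose $A<0$ on $[\rho_-,\rho_+]$, $A^2+B^2=1$ at $\rho_\pm$ and $A^2+B^2>1$ on $(\rho_-,\rho_+)$, $A(\rho)=-1$ exactly at $\rho_1<\rho_2$ in $(\rho_-,\rho_+)$ with $A<-1$ on $(\rho_1,\rho_2)$, and there is $\rho_0\in(\rho_1,\rho_2)$ with $B>0$ on $[\rho_-,\rho_0)$, $B(\rho_0)=0$, $B<0$ on $(\rho_0,\rho_+]$. Then $d\rho^+/dt>0$ on $(\rho_-,\rho_1)$ and $d\rho^+/dt<0$ on $(\rho_1,\rho_+)$ (so the $(+)$ family starts on both ergospheres $\rho=\rho_-$ and $\rho=\rho_+$), and $d\varphi^+/dt=B(\rho_1)/\rho_1>0$ at $\rho=\rho_1$. Consequently every $(+)$ trajectory in the ergoregion satisfies $\rho^+(t)\to\rho_1$ as $t\to+\infty$, approaching the horizon $\rho=\rho_1$, which is traversed counterclockwise.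
   Context: Acoustic metric in the plane with polar coordinates $(\rho,\varphi)$: Hamiltonian $H=(\tau+A\xi_\rho+B\xi_\varphi/\rho)^2-\xi_\rho^2-(\xi_\varphi/\rho)^2$, $A=A(\rho)$, $B=B(\rho)$ smooth. The ergoregion is the annulus $\rho_-<\rho<\rho_+$ where $A^2+B^2>1$. Zero-energy null geodesics are the null bicharacteristics with $\tau=0$ parametrized by $t$; the sign in $\xi_\rho=\frac{-AB\pm\sqrt{A^2+B^2-1}}{A^2-1}\,\xi_\varphi/\rho$ defines the $(\pm)$ family. With $s=\sqrt{A^2+B^2-1}$, the equations of motion in the ergoregion are $$\frac{d\rho^\pm}{dt}=\frac{A(A^2+B^2-1)\pm Bs}{A^2+B^2},\qquad \frac{d\varphi^\pm}{dt}=\frac{s\,(Bs\mp A)}{\rho\,(A^2+B^2)}.$$ A horizon of the $(\pm)$ family is a circle $\{\rho=c\}$ in the ergoregion which is a closed trajectory of that family. *)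

theory Defs
  imports "HOL-Analysis.Analysis"
begin

definition smooth_fun :: "(real \<Rightarrow> real) \<Rightarrow> bool" where
  "smooth_fun f \<longleftrightarrow> (\<forall>n. \<forall>x. ((deriv ^^ n) f) differentiable (at x))"

definition s_fun :: "(real \<Rightarrow> real) \<Rightarrow> (real \<Rightarrow> real) \<Rightarrow> real \<Rightarrow> real" where
  "s_fun A B r = sqrt ((A r)^2 + (B r)^2 - 1)"

definition drho_plus :: "(real \<Rightarrow> real) \<Rightarrow> (real \<Rightarrow> real) \<Rightarrow> real \<Rightarrow> real" where
  "drho_plus A B r =
     (A r * ((A r)^2 + (B r)^2 - 1) + B r * s_fun A B r) / ((A r)^2 + (B r)^2)"

definition dphi_plus :: "(real \<Rightarrow> real) \<Rightarrow> (real \<Rightarrow> real) \<Rightarrow> real \<Rightarrow> real" where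
  "dphi_plus A B r =
     s_fun A B r * (B r * s_fun A B r - A r) / (r * ((A r)^2 + (B r)^2))"

text \<open>A (+) zero-energy null geodesic (t \<mapsto> (rho t, phi t)) defined for all t \<ge> 0
  and lying in the ergoregion rho_- < rho < rho_+.\<close>
definition plus_trajectory_in_ergo ::
  "(real \<Rightarrow> real) \<Rightarrow> (real \<Rightarrow> real) \<Rightarrow> real \<Rightarrow> real \<Rightarrow>
   (real \<Rightarrow> real) \<Rightarrow> (real \<Rightarrow> real) \<Rightarrow> bool" where
  "plus_trajectory_in_ergo A B rm rp rho phi \<longleftrightarrow>
     (\<forall>t\<ge>0. rho t \<in> {rm<..<rp} \<and>
        (rho has_real_derivative drho_plus A B (rho t)) (at t within {0..}) \<and>
        (phi has_real_derivative dphi_plus A B (rho t)) (at t within {0..}))"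

end

theory Submission
  imports Defs
begin

lemma alg1:
  fixes a b u :: real
  assumes "a < 0" "a > -1" "b > 0" "u > 0" "u^2 = a^2+b^2-1"
  shows "a*u + b > 0"
proof -
  have e: "(-a*u)^2 = a^2*(a^2+b^2-1)" using assms(5) by (simp add: power_mult_distrib)
  have d: "b^2 - (-a*u)^2 = (1-a^2)*(a^2+b^2)"
    unfolding e by (simp add: algebra_simps)
  have "\<bar>a\<bar> < 1" using assms by linarith
  then have "a^2 < 1" by (simp add: abs_square_less_1)
  moreover have "b^2 > 0" using assms by simp
  moreover have "a^2 \<ge> 0" by simp
  ultimately have "(1-a^2)*(a^2+b^2) > 0" by (intro mult_pos_pos) linarith+
  then have "(-a*u)^2 < b^2" using d by linarith
  then have "-a*u < b" using assms by (meson power_less_imp_less_base less_imp_le)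
  then show ?thesis by simp
qed

lemma alg2:
  fixes a b u :: real
  assumes "a < -1" "b \<ge> 0" "u > 0" "u^2 = a^2+b^2-1"
  shows "a*u + b < 0"
proof -
  have e: "(-a*u)^2 = a^2*(a^2+b^2-1)" using assms(4) by (simp add: power_mult_distrib)
  have d: "(-a*u)^2 - b^2 = (a^2-1)*(a^2+b^2)"
    unfolding e by (simp add: algebra_simps)
  have "1 < (-a)*(-a)" using assms by (intro less_1_mult) linarith+
  then have "a^2 > 1" by (simp add: power2_eq_square)
  moreover have "b^2 \<ge> 0" by simp
  ultimately have "(a^2-1)*(a^2+b^2) > 0" by (intro mult_pos_pos) linarith+
  then have "b^2 < (-a*u)^2" using d by linarith
  moreover have "-a*u \<ge> 0" using assms by (simp add: mult_nonpos_nonneg)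
  ultimately have "b < -a*u" by (meson power_less_imp_less_base)
  then show ?thesis by simp
qed

lemma drho_sign:
  fixes A B :: "real \<Rightarrow> real"
  assumes "(A r)^2 + (B r)^2 > 1"
  shows "drho_plus A B r > 0 \<longleftrightarrow> A r * s_fun A B r + B r > 0"
    and "drho_plus A B r < 0 \<longleftrightarrow> A r * s_fun A B r + B r < 0"
proof -
  have sp: "s_fun A B r > 0" using assms by (simp add: s_fun_def)
  have ss: "(s_fun A B r)^2 = (A r)^2 + (B r)^2 - 1" using assms by (simp add: s_fun_def)
  have "drho_plus A B r = s_fun A B r * (A r * s_fun A B r + B r) / ((A r)^2 + (B r)^2)"
    unfolding drho_plus_def ss[symmetric] by (simp add: power2_eq_square algebra_simps)
  moreover have "(A r)^2 + (B r)^2 > 0" using assms by linarith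
  ultimately show "drho_plus A B r > 0 \<longleftrightarrow> A r * s_fun A B r + B r > 0"
    and "drho_plus A B r < 0 \<longleftrightarrow> A r * s_fun A B r + B r < 0"
    using sp by (simp_all add: zero_less_divide_iff zero_less_mult_iff divide_less_0_iff mult_less_0_iff)
qed

lemma smooth_cont: "smooth_fun f \<Longrightarrow> continuous_on S f"
proof -
  assume "smooth_fun f"
  then have "\<forall>x. ((deriv ^^ 0) f) differentiable (at x)" unfolding smooth_fun_def by blast
  then have "\<forall>x. f differentiable (at x)" by simp
  then show ?thesis by (meson continuous_at_imp_continuous_on differentiable_imp_continuous_within)
qed

lemma s_props:
  assumes "(A r)^2 + (B r)^2 > (1::real)"
  shows "s_fun A B r > 0" "(s_fun A B r)^2 = (A r)^2 + (B r)^2 - 1"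
  using assms by (simp_all add: s_fun_def)

theorem mainTheorem9:
  fixes A B :: "real \<Rightarrow> real" and rm rp r0 r1 r2 :: real
  assumes smoothA: "smooth_fun A" and smoothB: "smooth_fun B"
    and pos: "0 < rm"
    and order: "rm < r1" "r1 < r0" "r0 < r2" "r2 < rp"
    and Aneg: "\<forall>r\<in>{rm..rp}. A r < 0"
    and ergo_m: "(A rm)^2 + (B rm)^2 = 1"
    and ergo_p: "(A rp)^2 + (B rp)^2 = 1"
    and ergo: "\<forall>r\<in>{rm<..<rp}. (A r)^2 + (B r)^2 > 1"
    and Am1: "\<forall>r\<in>{rm<..<rp}. A r = -1 \<longleftrightarrow> (r = r1 \<or> r = r2)"
    and Alt: "\<forall>r\<in>{r1<..<r2}. A r < -1"
    and Bpos: "\<forall>r\<in>{rm..<r0}. B r > 0"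
    and B0: "B r0 = 0"
    and Bneg: "\<forall>r\<in>{r0<..rp}. B r < 0"
  shows "(\<forall>r\<in>{rm<..<r1}. drho_plus A B r > 0)
       \<and> (\<forall>r\<in>{r1<..<rp}. drho_plus A B r < 0)
       \<and> drho_plus A B r1 = 0
       \<and> dphi_plus A B r1 = B r1 / r1 \<and> B r1 / r1 > 0
       \<and> (\<forall>rho phi. plus_trajectory_in_ergo A B rm rp rho phi
                \<longrightarrow> (rho \<longlongrightarrow> r1) at_top)"
proof -
  have cA: "continuous_on S A" for S using smooth_cont smoothA by blast
  have cB: "continuous_on S B" for S using smooth_cont smoothB by blast
  have r1in: "r1 \<in> {rm<..<rp}" using order by auto
  have Ar1: "A r1 = -1" using Am1 r1in by blast
  have Br1: "B r1 > 0" using Bpos order by auto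
  have Arm: "A rm > -1"
  proof -
    have "B rm > 0" using Bpos order by auto
    then have "(B rm)^2 > 0" by simp
    then have "(A rm)^2 < 1" using ergo_m by linarith
    then have "\<bar>A rm\<bar> < 1" by (simp add: abs_square_less_1)
    thus ?thesis by linarith
  qed
  have Agt: "A x > -1" if "rm \<le> x" "x < r1" for x
  proof (rule ccontr)
    assume "\<not> A x > -1"
    then have "A x \<le> -1" by simp
    have "\<exists>y\<ge>rm. y \<le> x \<and> A y = -1"
      by (rule IVT2') (use \<open>A x \<le> -1\<close> Arm that cA in auto)
    then obtain y where y: "rm \<le> y" "y \<le> x" "A y = -1" by blast
    have "y \<noteq> rm" using Arm y by auto
    then have "y \<in> {rm<..<rp}" using y that order by auto
    then have "y = r1 \<or> y = r2" using Am1 y by blast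
    thus False using y that order by auto
  qed
  have P1: "\<forall>r\<in>{rm<..<r1}. drho_plus A B r > 0"
  proof
    fix r assume r: "r \<in> {rm<..<r1}"
    have e: "(A r)^2 + (B r)^2 > 1" using ergo r order by auto
    show "drho_plus A B r > 0" unfolding drho_sign(1)[where A=A and B=B and r=r, OF e]
      apply (rule alg1)
      using Aneg Agt Bpos r order s_props[where A=A and B=B and r=r, OF e] by auto
  qed
  have P2: "\<forall>r\<in>{r1<..<rp}. drho_plus A B r < 0"
  proof
    fix r assume r: "r \<in> {r1<..<rp}"
    have e: "(A r)^2 + (B r)^2 > 1" using ergo r order by auto
    show "drho_plus A B r < 0" unfolding drho_sign(2)[where A=A and B=B and r=r, OF e]
    proof (cases "r \<le> r0")
      case True
      have "B r \<ge> 0"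
      proof (cases "r = r0")
        case True then show ?thesis using B0 by simp
      next
        case False
        then have "r \<in> {rm..<r0}" using \<open>r \<le> r0\<close> r order by auto
        then show ?thesis using Bpos by fastforce
      qed
      moreover have "A r < -1" using Alt True r order by auto
      ultimately show "A r * s_fun A B r + B r < 0"
        using alg2 s_props[where A=A and B=B and r=r, OF e] by blast
    next
      case False
      have "B r < 0" using False Bneg r by auto
      moreover have "A r < 0" using Aneg r order by auto
      ultimately show "A r * s_fun A B r + B r < 0"
        using s_props(1)[where A=A and B=B and r=r, OF e] by (smt (verit) mult_neg_pos)
    qed
  qed
  have sr1: "s_fun A B r1 = B r1" using Ar1 Br1 by (simp add: s_fun_def)
  have P3: "drho_plus A B r1 = 0" unfolding drho_plus_def sr1 Ar1 by (simp add: power2_eq_square)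
  have nz: "1 + B r1 * B r1 \<noteq> 0" by (smt (verit) zero_le_square)
  have "dphi_plus A B r1 = (B r1 * (1 + B r1 * B r1)) / (r1 * (1 + B r1 * B r1))"
    unfolding dphi_plus_def sr1 Ar1 by (simp add: power2_eq_square algebra_simps)
  also have "\<dots> = B r1 / r1" using nz by (rule nonzero_mult_divide_mult_cancel_right)
  finally have P4: "dphi_plus A B r1 = B r1 / r1" .
  have P5: "B r1 / r1 > 0" using Br1 order pos by simp
  have Q: "(x - r1) * drho_plus A B x < 0" if "x \<in> {rm<..<rp}" "x \<noteq> r1" for x
  proof (cases "x < r1")
    case True then show ?thesis using P1 that by (auto simp: mult_neg_pos)
  next
    case False then show ?thesis using P2 that by (auto simp: mult_pos_neg)
  qed
  have cD: "continuous_on {rm<..<rp} (drho_plus A B)"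
    unfolding drho_plus_def s_fun_def
    using ergo by (auto intro!: continuous_intros cA cB)
  have P6: "\<forall>rho phi. plus_trajectory_in_ergo A B rm rp rho phi \<longrightarrow> (rho \<longlongrightarrow> r1) at_top"
  proof (intro allI impI)
    fix rho phi assume tr: "plus_trajectory_in_ergo A B rm rp rho phi"
    have rin: "\<And>t. t \<ge> 0 \<Longrightarrow> rho t \<in> {rm<..<rp}"
      and rd: "\<And>t. t\<ge>0 \<Longrightarrow> (rho has_real_derivative drho_plus A B (rho t)) (at t within {0..})"
      using tr unfolding plus_trajectory_in_ergo_def by auto
    define h where "h t = (rho t - r1) * (rho t - r1)" for t
    have hd: "(h has_real_derivative 2*((rho t - r1)*drho_plus A B (rho t))) (at t within {0..})"
      if "t\<ge>0" for t
      unfolding h_def using rd[OF that] by (auto intro!: derivative_eq_intros simp: algebra_simps)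
    have hmvt: "\<exists>x\<in>{a..b}. h b - h a = 2*((rho x - r1)*drho_plus A B (rho x)) * (b - a)"
      if "0 \<le> a" "a \<le> b" for a b
      apply (rule mvt_very_simple[OF that(2)])
      apply (rule has_field_derivative_imp_has_derivative)
      apply (rule has_field_derivative_subset[OF hd])
      using that by auto
    have hdec: "h b \<le> h a" if ab: "0 \<le> a" "a \<le> b" for a b
    proof -
      obtain x where x: "x \<in> {a..b}" "h b - h a = 2*((rho x - r1)*drho_plus A B (rho x)) * (b - a)"
        using hmvt[OF ab] by blast
      have "(rho x - r1)*drho_plus A B (rho x) \<le> 0"
        using Q[of "rho x"] rin[of x] x ab by (cases "rho x = r1") force+
      then have "2*((rho x - r1)*drho_plus A B (rho x)) * (b - a) \<le> 0"
        using ab by (simp add: mult_nonpos_nonneg)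
      thus ?thesis using x by linarith
    qed
    have hnn: "h t \<ge> 0" for t unfolding h_def by simp
    have rcont: "continuous_on {0..} rho"
      using rd DERIV_continuous continuous_on_eq_continuous_within by fastforce
    have ex: "\<exists>T\<ge>0. h T < \<epsilon>" if eps: "\<epsilon> > 0" for \<epsilon>
    proof (rule ccontr)
      assume "\<not> ?thesis"
      then have big: "\<And>t. t \<ge> 0 \<Longrightarrow> h t \<ge> \<epsilon>" by force
      define a0 where "a0 = rho 0"
      have neq: "rho t \<noteq> r1" if "t \<ge> 0" for t using big[OF that] eps unfolding h_def by auto
      have sgn: "(a0 - r1) * (rho t - r1) > 0" if t: "t \<ge> 0" for t
      proof (rule ccontr)
        assume "\<not> ?thesis"
        moreover have "a0 \<noteq> r1" "rho t \<noteq> r1" using neq t a0_def by auto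
        ultimately have "(a0 < r1 \<and> r1 < rho t) \<or> (rho t < r1 \<and> r1 < a0)"
          by (smt (verit) mult_neg_neg mult_pos_pos)
        moreover have cc: "continuous_on {0..t} rho"
          using continuous_on_subset[OF rcont] by auto
        ultimately obtain y where "0 \<le> y" "y \<le> t" "rho y = r1"
          using IVT'[of rho 0 r1 t] IVT2'[of rho t r1 0] t a0_def by force
        then show False using neq by auto
      qed
      have bnd: "\<bar>rho t - r1\<bar> \<le> \<bar>a0 - r1\<bar>" if t: "t \<ge> 0" for t
      proof -
        have "h t \<le> h 0" using hdec t by auto
        then show ?thesis unfolding h_def a0_def
          by (metis abs_le_square_iff power2_eq_square)
      qed
      define S where "S = {min a0 r1..max a0 r1} \<inter> {x. \<epsilon> \<le> (x - r1) * (x - r1)}"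
      have inS: "rho t \<in> S" if t: "t \<ge> 0" for t
      proof -
        have "(a0 < r1 \<and> rho t < r1) \<or> (a0 > r1 \<and> rho t > r1)"
          using sgn[OF t] by (auto simp: zero_less_mult_iff)
        then have "rho t \<in> {min a0 r1..max a0 r1}" using bnd[OF t] by auto
        moreover have "\<epsilon> \<le> (rho t - r1) * (rho t - r1)" using big[OF t] h_def by simp
        ultimately show ?thesis unfolding S_def by auto
      qed
      have a0in: "a0 \<in> {rm<..<rp}" using rin[of 0] a0_def by simp
      have Ssub: "S \<subseteq> {rm<..<rp}" unfolding S_def using a0in r1in by auto
      have Sne: "S \<noteq> {}" using inS[of 0] by auto
      have Scomp: "compact S" unfolding S_def
        by (intro compact_Int_closed compact_Icc closed_Collect_le continuous_intros)
      have qc: "continuous_on S (\<lambda>x. (x - r1) * drho_plus A B x)"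
        by (intro continuous_intros continuous_on_subset[OF cD Ssub])
      obtain xm where xm: "xm \<in> S" "\<And>y. y \<in> S \<Longrightarrow> (y - r1) * drho_plus A B y \<le> (xm - r1) * drho_plus A B xm"
        using continuous_attains_sup[OF Scomp Sne qc] by blast
      define c where "c = - 2 * ((xm - r1) * drho_plus A B xm)"
      have "xm \<noteq> r1" using xm(1) eps unfolding S_def by auto
      then have cpos: "c > 0" unfolding c_def using Q[of xm] xm(1) Ssub by auto
      have hlin: "h t \<le> h 0 - c * t" if t: "t \<ge> 0" for t
      proof -
        obtain x where x: "x \<in> {0..t}" "h t - h 0 = 2*((rho x - r1)*drho_plus A B (rho x)) * (t - 0)"
          using hmvt[OF order_refl t] by blast
        have "(rho x - r1)*drho_plus A B (rho x) \<le> (xm - r1) * drho_plus A B xm"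
          using xm(2) inS x by auto
        then have "2*((rho x - r1)*drho_plus A B (rho x)) * t \<le> - c * t"
          unfolding c_def using t by (intro mult_right_mono) auto
        then show ?thesis using x by simp
      qed
      define T where "T = h 0 / c + 1"
      have "T \<ge> 0" unfolding T_def using cpos hnn[of 0] by simp
      then have "h T \<le> h 0 - c * T" by (rule hlin)
      also have "\<dots> = - c" unfolding T_def using cpos by (simp add: field_simps)
      finally show False using hnn[of T] cpos by linarith
    qed
    show "(rho \<longlongrightarrow> r1) at_top"
      unfolding tendsto_iff
    proof (intro allI impI)
      fix e :: real assume e: "e > 0"
      obtain T where T: "T \<ge> 0" "h T < e^2" using ex[of "e^2"] e by auto
      have "dist (rho t) r1 < e" if "t \<ge> T" for t
      proof -
        have "h t < e^2" using hdec[of T t] T that by linarith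
        then have "\<bar>rho t - r1\<bar>^2 < e^2" unfolding h_def by (simp add: power2_eq_square)
        then have "\<bar>rho t - r1\<bar> < e" using e by (meson less_imp_le power_less_imp_less_base)
        then show ?thesis by (simp add: dist_real_def)
      qed
      then show "\<forall>\<^sub>F x in at_top. dist (rho x) r1 < e"
        unfolding eventually_at_top_linorder by blast
    qed
  qed
  show ?thesis using P1 P2 P3 P4 P5 P6 by blast
qed

end
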